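(* Let $1\le q<2$ and let $C_q$ and $\mathbf{T}_1$ be as in the context. If $\mathbf{y}\in\mathbb{R}^d\setminus\{\mathbf{x}_1,\dots,\mathbf{x}_m\}$, then $C_q(\mathbf{T}_1(\mathbf{y}))\le C_q(\mathbf{y})$, with equality only when $\mathbf{T}_1(\mathbf{y})=\mathbf{y}$.
   Context: Let $\mathbf{x}_1,\dots,\mathbf{x}_m\in\mathbb{R}^d$ be distinct data points, not all lying on a common affine line, and let $\eta_1,\dots,\eta_m>0$ be weights. For $1\le q<2$ define the cost $C_q(\mathbf{y})=\sum_{i=1}^m \eta_i^q\|\mathbf{y}-\mathbf{x}_i\|^q$ ($\|\cdot\|$ the Euclidean norm); it is strictly convex with a unique minimizer $\mathbf{M}$. For $\mathbf{y}\notin\{\mathbf{x}_i\}_{i=1}^m$ define the Weiszfeld map $\mathbf{T}_1(\mathbf{y})=\dfrac{\sum_{i=1}^m \eta_i^q\|\mathbf{y}-\mathbf{x}_i\|^{q-2}\mathbf{x}_i}{\sum_{i=1}^m \eta_i^q\|\mathbf{y}-\mathbf{x}_i\|^{q-2}}$. *)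

theory Defs
  imports "HOL-Analysis.Analysis"
begin

definition cost_q :: "real \<Rightarrow> nat \<Rightarrow> (nat \<Rightarrow> 'a::euclidean_space) \<Rightarrow> (nat \<Rightarrow> real) \<Rightarrow> 'a \<Rightarrow> real" where
  "cost_q q m x eta y = (\<Sum>i<m. (eta i powr q) * (norm (y - x i) powr q))"

text \<open>Weiszfeld map T_1 (meaningful for y not among the data points).\<close>
definition weiszfeld_T1 :: "real \<Rightarrow> nat \<Rightarrow> (nat \<Rightarrow> 'a::euclidean_space) \<Rightarrow> (nat \<Rightarrow> real) \<Rightarrow> 'a \<Rightarrow> 'a" where
  "weiszfeld_T1 q m x eta y =
     (\<Sum>i<m. ((eta i powr q) * (norm (y - x i) powr (q - 2))) *\<^sub>R x i) /\<^sub>R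
     (\<Sum>i<m. (eta i powr q) * (norm (y - x i) powr (q - 2)))"

end

theory Submission
  imports Defs
begin

lemma tang:
  fixes a b p :: real
  assumes "0 < p" "p \<le> 1" "0 \<le> a" "0 < b"
  shows "a powr p \<le> b powr p + p * b powr (p - 1) * (a - b)"
proof (cases "a = 0")
  case True
  have "0 \<le> (1 - p) * b powr p" using assms by simp
  moreover have "b powr (p-1) * b = b powr p"
    using assms by (simp add: powr_diff)
  ultimately show ?thesis using True assms by (simp add: algebra_simps)
next
  case False
  hence a: "a > 0" using assms by simp
  have Y: "a powr p * b powr (1 - p) \<le> p * a + (1 - p) * b"
    using Youngs_inequality_0[of p "1-p" a b] assms a by simp
  have pos: "b powr (p - 1) > 0" using assms by simp
  have "a powr p = (a powr p * b powr (1 - p)) * b powr (p - 1)"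
    using assms by (simp add: mult.assoc flip: powr_add)
  also have "\<dots> \<le> (p * a + (1 - p) * b) * b powr (p - 1)"
    using Y pos by (simp add: mult_right_mono)
  also have "\<dots> = b powr p + p * b powr (p - 1) * (a - b)"
  proof -
    have "b * b powr (p - 1) = b powr p" using assms by (simp add: powr_diff)
    thus ?thesis by (simp add: algebra_simps)
  qed
  finally show ?thesis .
qed

lemma tang2:
  fixes t d q :: real
  assumes "1 \<le> q" "q < 2" "0 \<le> t" "0 < d"
  shows "t powr q \<le> d powr q + (q/2) * d powr (q - 2) * (t^2 - d^2)"
proof -
  have sq: "z^2 = z powr 2" if "z \<ge> 0" for z :: real
    using powr_realpow'[of z 2] that by simp
  have 1: "(t^2) powr (q/2) = t powr q"
    unfolding sq[OF assms(3)] powr_powr by simp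
  have 2: "(d^2) powr (q/2) = d powr q"
    unfolding sq[OF less_imp_le[OF assms(4)]] powr_powr using assms by simp
  have 3: "(d^2) powr (q/2 - 1) = d powr (q - 2)"
    unfolding sq[OF less_imp_le[OF assms(4)]] powr_powr using assms by (simp add: algebra_simps)
  have "(t^2) powr (q/2) \<le> (d^2) powr (q/2) + (q/2) * (d^2) powr (q/2 - 1) * (t^2 - d^2)"
    by (rule tang) (use assms in auto)
  thus ?thesis unfolding 1 2 3 .
qed

theorem theorem1:
  fixes q :: real and m :: nat and x :: "nat \<Rightarrow> 'a::euclidean_space"
    and eta :: "nat \<Rightarrow> real" and y :: 'a
  assumes q1: "1 \<le> q" and q2: "q < 2"
    and distinct: "inj_on x {..<m}"
    and noncollinear: "\<not> collinear (x ` {..<m})"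
    and eta_pos: "\<And>i. i < m \<Longrightarrow> 0 < eta i"
    and y_notin: "y \<notin> x ` {..<m}"
  shows "cost_q q m x eta (weiszfeld_T1 q m x eta y) \<le> cost_q q m x eta y
         \<and> (cost_q q m x eta (weiszfeld_T1 q m x eta y) = cost_q q m x eta y
              \<longrightarrow> weiszfeld_T1 q m x eta y = y)"
proof -
  define w where "w i = (eta i powr q) * (norm (y - x i) powr (q - 2))" for i
  define W where "W = (\<Sum>i<m. w i)"
  define T where "T = weiszfeld_T1 q m x eta y"
  have m0: "m > 0"
  proof (rule ccontr)
    assume "\<not> m > 0" hence "x ` {..<m} = {}" by auto
    thus False using noncollinear by simp
  qed
  have dpos: "norm (y - x i) > 0" if "i < m" for i
    using y_notin that by auto
  have wpos: "w i > 0" if "i < m" for i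
    using dpos[OF that] eta_pos[OF that] unfolding w_def by simp
  have Wpos: "W > 0" unfolding W_def
    using m0 wpos by (intro sum_pos) auto
  have TW: "W *\<^sub>R T = (\<Sum>i<m. w i *\<^sub>R x i)"
    unfolding T_def weiszfeld_T1_def W_def w_def using Wpos unfolding W_def w_def by simp
  have ident: "(\<Sum>i<m. w i * ((norm (T - x i))^2 - (norm (y - x i))^2)) = - W * (norm (T - y))^2"
  proof -
    have e: "(norm (T - x i))^2 - (norm (y - x i))^2 = (norm (T - y))^2 + 2 * ((T - y) \<bullet> (y - x i))" for i
    proof -
      have gen: "(norm (a + b))^2 = (norm a)^2 + 2*(a \<bullet> b) + (norm b)^2" for a b :: 'a
        using dot_norm[of a b] by simp
      show ?thesis using gen[of "T - y" "y - x i"] by simp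
    qed
    have "(\<Sum>i<m. w i * ((norm (T - x i))^2 - (norm (y - x i))^2))
        = W * (norm (T - y))^2 + 2 * ((T - y) \<bullet> (\<Sum>i<m. w i *\<^sub>R (y - x i)))"
    proof -
      have "(\<Sum>i<m. w i * ((norm (T - x i))^2 - (norm (y - x i))^2))
          = (\<Sum>i<m. w i * (norm (T - y))^2 + 2 * ((T - y) \<bullet> (w i *\<^sub>R (y - x i))))"
        by (rule sum.cong) (simp_all add: e algebra_simps)
      also have "\<dots> = W * (norm (T - y))^2 + 2 * ((T - y) \<bullet> (\<Sum>i<m. w i *\<^sub>R (y - x i)))"
        unfolding sum.distrib W_def sum_distrib_right inner_sum_right sum_distrib_left ..
      finally show ?thesis .
    qed
    also have "(\<Sum>i<m. w i *\<^sub>R (y - x i)) = W *\<^sub>R y - W *\<^sub>R T"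
    proof -
      have "(\<Sum>i<m. w i *\<^sub>R (y - x i)) = (\<Sum>i<m. w i) *\<^sub>R y - (\<Sum>i<m. w i *\<^sub>R x i)"
        by (simp add: scaleR_diff_right sum_subtractf scaleR_sum_left)
      then show ?thesis using TW unfolding W_def by simp
    qed
    also have "(T - y) \<bullet> (W *\<^sub>R y - W *\<^sub>R T) = - W * (norm (T - y))^2"
    proof -
      have "W *\<^sub>R y - W *\<^sub>R T = - (W *\<^sub>R (T - y))" by (simp add: scaleR_diff_right)
      then show ?thesis by (simp add: power2_norm_eq_inner)
    qed
    finally show ?thesis by simp
  qed
  have per: "eta i powr q * norm (T - x i) powr q \<le> eta i powr q * norm (y - x i) powr q
       + (q/2) * (w i * ((norm (T - x i))^2 - (norm (y - x i))^2))" if "i < m" for i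
  proof -
    have "norm (T - x i) powr q \<le> norm (y - x i) powr q + (q/2) * norm (y - x i) powr (q - 2) * ((norm (T - x i))^2 - (norm (y - x i))^2)"
      using tang2[OF q1 q2 norm_ge_zero dpos[OF that]] .
    hence "eta i powr q * norm (T - x i) powr q \<le> eta i powr q * (norm (y - x i) powr q + (q/2) * norm (y - x i) powr (q - 2) * ((norm (T - x i))^2 - (norm (y - x i))^2))"
      by (intro mult_left_mono) auto
    thus ?thesis unfolding w_def by (simp add: algebra_simps)
  qed
  have "cost_q q m x eta T \<le> (\<Sum>i<m. eta i powr q * norm (y - x i) powr q
       + (q/2) * (w i * ((norm (T - x i))^2 - (norm (y - x i))^2)))"
    unfolding cost_q_def by (rule sum_mono) (use per in auto)
  also have "\<dots> = cost_q q m x eta y - (q/2) * W * (norm (T - y))^2"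
    unfolding cost_q_def sum.distrib sum_distrib_left[symmetric] ident by simp
  finally have main: "cost_q q m x eta T \<le> cost_q q m x eta y - (q/2) * W * (norm (T - y))^2" .
  have nn: "0 \<le> (q/2) * W * (norm (T - y))^2" using q1 Wpos by simp
  show ?thesis unfolding T_def[symmetric]
  proof
    show "cost_q q m x eta T \<le> cost_q q m x eta y" using main nn by linarith
    show "cost_q q m x eta T = cost_q q m x eta y \<longrightarrow> T = y"
    proof
      assume "cost_q q m x eta T = cost_q q m x eta y"
      hence "(q/2) * W * (norm (T - y))^2 \<le> 0" using main by linarith
      hence "(norm (T - y))^2 \<le> 0" using q1 Wpos
      proof -
        have "0 < (q/2) * W" using q1 Wpos by simp
        thus ?thesis using \<open>(q/2) * W * (norm (T - y))^2 \<le> 0\<close>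
          using q1 Wpos by (auto simp add: mult_le_0_iff)
      qed
      thus "T = y" by simp
    qed
  qed
qed

end
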